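(* Let $(\mathcal S,\mathcal A,P,R,d_0)$ be a finite episodic MDP with horizon $T$ and $\pi_\theta$ a parameterized policy as described in the context. Let $\theta_0\in\mathbb R^n$ and let $(\theta_i)$ be generated by $$\theta_{i+1}=\theta_i+\alpha_i\,\hat\nabla(\theta_i,\gamma_i),$$ where for all $i$ the step size $\alpha_i>0$, the discount factor $\gamma_i\in[0,1]$, and $$\sum_{i=0}^\infty\alpha_i=\infty,\qquad\sum_{i=0}^\infty\alpha_i^2<\infty,\qquad \alpha_i\ge c(1-\gamma_i)$$ for some constant $c>0$. Then $J(\theta_i)$ converges to a finite value and $\lim_{i\to\infty}\nabla J(\theta_i)=0$. Furthermore, every limit point of $(\theta_i)$ is a stationary point of $J$.
   Context: Setting: $\mathcal S$ is a finite set of states, $\mathcal A$ a finite set of actions, $P(s'\mid s,a)$ a transition function, $R(\cdot\mid s,a,s')$ a reward distribution supported in $[-R_{\max},R_{\max}]$, and $d_0$ an initial state distribution. There is a terminal absorbing state in which the agent stays and receives reward $0$. An episode: $S_0\sim d_0$; at each time $t$, $A_t\sim\pi_\theta(\cdot\mid S_t)$, $S_{t+1}\sim P(\cdot\mid S_t,A_t)$, $R_t\sim R(\cdot\mid S_t,A_t,S_{t+1})$; the horizon $T$ is fixed and $S_T$ is terminal. The policy $\pi_\theta(a\mid s)$ is positive and differentiable in $\theta\in\mathbb R^n$, there is a constant $L_\pi$ with $\big\|\frac{\partial}{\partial\theta}\ln\pi_\theta(a\mid s)\big\|\le L_\pi$ for all $\theta,s,a$, and the parameterization is such that $J$ is continuously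 differentiable on $\mathbb R^n$ with Lipschitz continuous gradient. Expectations are under $\pi=\pi_\theta$. Objective: $J(\theta)=\mathbb E\big[\sum_{t=0}^{T-1}R_t\big]$. For $\gamma\in[0,1]$ (with $0^0=1$), the discounted action-value function is $Q^{\pi_\theta}_\gamma(s,a)=\mathbb E\big[\sum_{i=t}^{T}\gamma^{i-t}R_i\,\big|\,S_t=s,A_t=a\big]$ (treated as a function of $(s,a)$ only, i.e. not depending on $t$, e.g. because time is encoded in the state). The discounted approximation of the policy gradient is $$\hat\nabla(\theta,\gamma)=\mathbb E\Big[\sum_{t=0}^{T-1}Q^{\pi_\theta}_\gamma(S_t,A_t)\,\frac{\partial}{\partial\theta}\ln\pi_\theta(A_t\mid S_t)\Big].$$ *)

theory Defs
  imports "HOL-Probability.Probability"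
begin

text \<open>States: a finite type 's, actions: a finite type 'a.
  d0 s = initial probability, P s a s' = transition probability,
  R s a s' = reward distribution (a probability measure on the reals),
  pol s a = pi(a|s) for a fixed parameter.\<close>

fun state_dist :: "('s::finite \<Rightarrow> real) \<Rightarrow> ('s \<Rightarrow> 'a::finite \<Rightarrow> 's \<Rightarrow> real)
    \<Rightarrow> ('s \<Rightarrow> 'a \<Rightarrow> real) \<Rightarrow> nat \<Rightarrow> 's \<Rightarrow> real" where
  "state_dist d0 P pol 0 s = d0 s"
| "state_dist d0 P pol (Suc t) s' =
     (\<Sum>s\<in>UNIV. \<Sum>a\<in>UNIV. state_dist d0 P pol t s * pol s a * P s a s')"

definition mean_reward :: "('s \<Rightarrow> 'a \<Rightarrow> 's \<Rightarrow> real measure) \<Rightarrow> 's \<Rightarrow> 'a \<Rightarrow> 's \<Rightarrow> real" where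
  "mean_reward R s a s' = (\<integral>x. x \<partial>(R s a s'))"

definition J_obj :: "('s::finite \<Rightarrow> real) \<Rightarrow> ('s \<Rightarrow> 'a::finite \<Rightarrow> 's \<Rightarrow> real)
    \<Rightarrow> ('s \<Rightarrow> 'a \<Rightarrow> 's \<Rightarrow> real measure) \<Rightarrow> ('s \<Rightarrow> 'a \<Rightarrow> real) \<Rightarrow> nat \<Rightarrow> real" where
  "J_obj d0 P R pol T =
     (\<Sum>t<T. \<Sum>s\<in>UNIV. \<Sum>a\<in>UNIV. \<Sum>s'\<in>UNIV.
        state_dist d0 P pol t s * pol s a * P s a s' * mean_reward R s a s')"

fun Q_steps :: "('s::finite \<Rightarrow> 'a::finite \<Rightarrow> 's \<Rightarrow> real) \<Rightarrow> ('s \<Rightarrow> 'a \<Rightarrow> 's \<Rightarrow> real measure)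
    \<Rightarrow> ('s \<Rightarrow> 'a \<Rightarrow> real) \<Rightarrow> real \<Rightarrow> nat \<Rightarrow> 's \<Rightarrow> 'a \<Rightarrow> real" where
  "Q_steps P R pol \<gamma> 0 s a = 0"
| "Q_steps P R pol \<gamma> (Suc k) s a =
     (\<Sum>s'\<in>UNIV. P s a s' * (mean_reward R s a s'
        + \<gamma> * (\<Sum>a'\<in>UNIV. pol s' a' * Q_steps P R pol \<gamma> k s' a')))"

text \<open>Discounted action value Q_gamma(s,a) = E[sum_{i=t}^T gamma^(i-t) R_i | S_t=s, A_t=a].
  Since the episode is in the absorbing zero-reward terminal state from time T on,
  T further steps always cover the remaining episode, for every t.\<close>
definition Q_gamma :: "('s::finite \<Rightarrow> 'a::finite \<Rightarrow> 's \<Rightarrow> real) \<Rightarrow> ('s \<Rightarrow> 'a \<Rightarrow> 's \<Rightarrow> real measure)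
    \<Rightarrow> ('s \<Rightarrow> 'a \<Rightarrow> real) \<Rightarrow> nat \<Rightarrow> real \<Rightarrow> 's \<Rightarrow> 'a \<Rightarrow> real" where
  "Q_gamma P R pol T \<gamma> s a = Q_steps P R pol \<gamma> T s a"

text \<open>Discounted approximation of the policy gradient; glog s a is the gradient
  of ln pi_theta(a|s) at the current parameter.\<close>
definition disc_grad :: "('s::finite \<Rightarrow> real) \<Rightarrow> ('s \<Rightarrow> 'a::finite \<Rightarrow> 's \<Rightarrow> real)
    \<Rightarrow> ('s \<Rightarrow> 'a \<Rightarrow> 's \<Rightarrow> real measure) \<Rightarrow> ('s \<Rightarrow> 'a \<Rightarrow> real)
    \<Rightarrow> ('s \<Rightarrow> 'a \<Rightarrow> 'v::real_vector) \<Rightarrow> nat \<Rightarrow> real \<Rightarrow> 'v" where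
  "disc_grad d0 P R pol glog T \<gamma> =
     (\<Sum>t<T. \<Sum>s\<in>UNIV. \<Sum>a\<in>UNIV.
        (state_dist d0 P pol t s * pol s a * Q_gamma P R pol T \<gamma> s a) *\<^sub>R glog s a)"

end

theory Submission
  imports Defs
begin

lemma swap3: "(\<Sum>x\<in>A. \<Sum>y\<in>B. \<Sum>z\<in>C. f x y z) = (\<Sum>y\<in>B. \<Sum>z\<in>C. \<Sum>x\<in>A. f x y z)"
  by (subst sum.swap) (rule sum.cong[OF refl], rule sum.swap)

lemma sd_nonneg:
  assumes "\<forall>s. d s \<ge> 0" "\<forall>s a s'. P s a s' \<ge> 0" "\<forall>s a. pol s a \<ge> (0::real)"
  shows "state_dist d P pol t s \<ge> 0"
  using assms by (induction t arbitrary: s) (auto intro!: sum_nonneg)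

lemma sd_sum:
  assumes "(\<Sum>s\<in>UNIV. d s) = 1" "\<forall>s a. (\<Sum>s'\<in>UNIV. P s a s') = 1" "\<forall>s. (\<Sum>a\<in>UNIV. pol s a) = (1::real)"
  shows "(\<Sum>s\<in>UNIV. state_dist d P pol t s) = 1"
proof (induction t)
  case 0 then show ?case using assms by simp
next
  case (Suc t)
  have "(\<Sum>s'\<in>UNIV. state_dist d P pol (Suc t) s')
      = (\<Sum>s\<in>UNIV. \<Sum>a\<in>UNIV. state_dist d P pol t s * pol s a * (\<Sum>s'\<in>UNIV. P s a s'))"
    by (simp only: state_dist.simps, subst swap3, simp add: sum_distrib_left)
  also have "\<dots> = (\<Sum>s\<in>UNIV. state_dist d P pol t s * (\<Sum>a\<in>UNIV. pol s a))"
    using assms by (simp add: sum_distrib_left[symmetric])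
  also have "\<dots> = 1" using assms Suc by simp
  finally show ?case .
qed

lemma sd_shift: "state_dist d P pol (Suc t) s = state_dist (state_dist d P pol (Suc 0)) P pol t s"
  by (induction t arbitrary: s) simp_all

definition Vs :: "('s::finite \<Rightarrow> 'a::finite \<Rightarrow> 's \<Rightarrow> real) \<Rightarrow> ('s \<Rightarrow> 'a \<Rightarrow> 's \<Rightarrow> real measure)
    \<Rightarrow> ('s \<Rightarrow> 'a \<Rightarrow> real) \<Rightarrow> real \<Rightarrow> nat \<Rightarrow> 's \<Rightarrow> real" where
  "Vs P R pol \<gamma> k s = (\<Sum>a\<in>UNIV. pol s a * Q_steps P R pol \<gamma> k s a)"

lemma Q_Suc': "Q_steps P R pol \<gamma> (Suc k) s a = (\<Sum>s'\<in>UNIV. P s a s' * (mean_reward R s a s' + \<gamma> * Vs P R pol \<gamma> k s'))"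
  by (simp add: Vs_def)

lemma Vs_Suc: "Vs P R pol \<gamma> (Suc k) s = (\<Sum>a\<in>UNIV. pol s a * (\<Sum>s'\<in>UNIV. P s a s' * (mean_reward R s a s' + \<gamma> * Vs P R pol \<gamma> k s')))"
  unfolding Vs_def[of P R pol \<gamma> "Suc k" s] Q_Suc' ..

lemma J_Vs: "J_obj d P R pol T = (\<Sum>s\<in>UNIV. d s * Vs P R pol 1 T s)"
proof (induction T arbitrary: d)
  case 0 then show ?case by (simp add: J_obj_def Vs_def)
next
  case (Suc k)
  define d1 where "d1 = state_dist d P pol (Suc 0)"
  have d1: "d1 s' = (\<Sum>s\<in>UNIV. \<Sum>a\<in>UNIV. d s * pol s a * P s a s')" for s'
    by (simp add: d1_def)
  have "J_obj d P R pol (Suc k) = (\<Sum>s\<in>UNIV. \<Sum>a\<in>UNIV. \<Sum>s'\<in>UNIV. d s * pol s a * P s a s' * mean_reward R s a s')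
      + J_obj d1 P R pol k"
    unfolding J_obj_def d1_def by (subst sum.lessThan_Suc_shift) (simp add: sd_shift del: state_dist.simps(2))
  also have "J_obj d1 P R pol k = (\<Sum>s'\<in>UNIV. d1 s' * Vs P R pol 1 k s')" by (rule Suc)
  also have "\<dots> = (\<Sum>s\<in>UNIV. \<Sum>a\<in>UNIV. \<Sum>s'\<in>UNIV. d s * pol s a * P s a s' * Vs P R pol 1 k s')"
    unfolding d1 sum_distrib_right by (subst swap3) simp
  finally show ?case
    by (simp add: Vs_Suc sum_distrib_left distrib_left sum.distrib mult.assoc)
qed

fun GV :: "('s::finite \<Rightarrow> 'a::finite \<Rightarrow> 's \<Rightarrow> real) \<Rightarrow> ('s \<Rightarrow> 'a \<Rightarrow> 's \<Rightarrow> real measure)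
    \<Rightarrow> ('s \<Rightarrow> 'a \<Rightarrow> real) \<Rightarrow> ('s \<Rightarrow> 'a \<Rightarrow> 'v::real_vector) \<Rightarrow> nat \<Rightarrow> 's \<Rightarrow> 'v" where
  "GV P R pol gl 0 s = 0"
| "GV P R pol gl (Suc k) s = (\<Sum>a\<in>UNIV. (pol s a * Q_steps P R pol 1 (Suc k) s a) *\<^sub>R gl s a
      + pol s a *\<^sub>R (\<Sum>s'\<in>UNIV. P s a s' *\<^sub>R GV P R pol gl k s'))"

lemma GV_unroll:
  "(\<Sum>s\<in>UNIV. d s *\<^sub>R GV P R pol gl k s)
   = (\<Sum>t<k. \<Sum>s\<in>UNIV. \<Sum>a\<in>UNIV. (state_dist d P pol t s * pol s a * Q_steps P R pol 1 (k - t) s a) *\<^sub>R gl s a)"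
proof (induction k arbitrary: d)
  case 0 then show ?case by simp
next
  case (Suc k)
  define d1 where "d1 = state_dist d P pol (Suc 0)"
  have d1: "d1 s' = (\<Sum>s\<in>UNIV. \<Sum>a\<in>UNIV. d s * pol s a * P s a s')" for s'
    by (simp add: d1_def)
  have "(\<Sum>s\<in>UNIV. d s *\<^sub>R GV P R pol gl (Suc k) s)
     = (\<Sum>s\<in>UNIV. \<Sum>a\<in>UNIV. (d s * pol s a * Q_steps P R pol 1 (Suc k) s a) *\<^sub>R gl s a)
       + (\<Sum>s\<in>UNIV. \<Sum>a\<in>UNIV. \<Sum>s'\<in>UNIV. (d s * pol s a * P s a s') *\<^sub>R GV P R pol gl k s')"
    by (simp only: GV.simps scaleR_sum_right scaleR_add_right sum.distrib scaleR_scaleR mult.assoc)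
  also have "(\<Sum>s\<in>UNIV. \<Sum>a\<in>UNIV. \<Sum>s'\<in>UNIV. (d s * pol s a * P s a s') *\<^sub>R GV P R pol gl k s')
      = (\<Sum>s'\<in>UNIV. d1 s' *\<^sub>R GV P R pol gl k s')"
    unfolding d1 scaleR_sum_left by (subst swap3) simp
  also have "\<dots> = (\<Sum>t<k. \<Sum>s\<in>UNIV. \<Sum>a\<in>UNIV. (state_dist d1 P pol t s * pol s a * Q_steps P R pol 1 (k - t) s a) *\<^sub>R gl s a)"
    by (rule Suc)
  finally show ?case
    by (subst sum.lessThan_Suc_shift) (simp add: sd_shift d1_def del: state_dist.simps(2) Q_steps.simps)
qed

lemma GDERIV_sum:
  assumes "finite I" "\<And>i. i \<in> I \<Longrightarrow> GDERIV (f i) x :> D i"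
  shows "GDERIV (\<lambda>y. \<Sum>i\<in>I. f i y) x :> (\<Sum>i\<in>I. D i)"
  using assms unfolding gderiv_def inner_sum_right by (intro has_derivative_sum) auto

lemma GDERIV_cmult:
  assumes "GDERIV f x :> df" shows "GDERIV (\<lambda>x. c * f x) x :> c *\<^sub>R df"
  using GDERIV_mult[OF GDERIV_const assms, of c] by simp

lemma pi_deriv:
  assumes "\<forall>x. pp x > (0::real)" "GDERIV (\<lambda>x. ln (pp x)) \<theta> :> g"
  shows "GDERIV pp \<theta> :> pp \<theta> *\<^sub>R g"
proof -
  have "GDERIV (\<lambda>x. exp (ln (pp x))) \<theta> :> exp (ln (pp \<theta>)) *\<^sub>R g"
    by (rule GDERIV_DERIV_compose[OF assms(2)]) (rule DERIV_exp)
  moreover have "(\<lambda>x. exp (ln (pp x))) = pp" using assms(1) by auto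
  ultimately show ?thesis using assms(1) by simp
qed

lemma GV_deriv:
  assumes "\<forall>s a. GDERIV (\<lambda>x. pp x s a) \<theta> :> pp \<theta> s a *\<^sub>R gl s a"
  shows "GDERIV (\<lambda>x. Vs P R (pp x) 1 k s) \<theta> :> GV P R (pp \<theta>) gl k s"
proof (induction k arbitrary: s)
  case 0 then show ?case by (simp add: Vs_def GDERIV_const)
next
  case (Suc k)
  have Q: "GDERIV (\<lambda>x. Q_steps P R (pp x) 1 (Suc k) s a) \<theta> :> (\<Sum>s'\<in>UNIV. P s a s' *\<^sub>R GV P R (pp \<theta>) gl k s')" for a
    unfolding Q_Suc'
  proof (rule GDERIV_sum)
    fix s' :: 'a
    have "GDERIV (\<lambda>x. P s a s' * (mean_reward R s a s' + 1 * Vs P R (pp x) 1 k s')) \<theta> :>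
            P s a s' *\<^sub>R (0 + 1 *\<^sub>R GV P R (pp \<theta>) gl k s')"
      by (intro GDERIV_cmult GDERIV_add GDERIV_const Suc)
    then show "GDERIV (\<lambda>x. P s a s' * (mean_reward R s a s' + 1 * Vs P R (pp x) 1 k s')) \<theta> :>
            P s a s' *\<^sub>R GV P R (pp \<theta>) gl k s'" by simp
  qed simp
  have "GDERIV (\<lambda>x. \<Sum>a\<in>UNIV. pp x s a * Q_steps P R (pp x) 1 (Suc k) s a) \<theta> :>
     (\<Sum>a\<in>UNIV. pp \<theta> s a *\<^sub>R (\<Sum>s'\<in>UNIV. P s a s' *\<^sub>R GV P R (pp \<theta>) gl k s')
        + Q_steps P R (pp \<theta>) 1 (Suc k) s a *\<^sub>R (pp \<theta> s a *\<^sub>R gl s a))"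
    by (intro GDERIV_sum GDERIV_mult Q assms[rule_format]) simp
  then show ?case
    unfolding Vs_def[of P R _ 1 "Suc k" s] GV.simps(2)[of P R "pp \<theta>" gl k s]
    by (simp add: algebra_simps del: Q_steps.simps)
qed

lemma GDERIV_unique:
  assumes "GDERIV f x :> D1" "GDERIV f x :> D2" shows "D1 = D2"
proof -
  have "(\<lambda>h. h \<bullet> D1) = (\<lambda>h. h \<bullet> D2)"
    using assms unfolding gderiv_def by (rule has_derivative_unique)
  then have "(D1 - D2) \<bullet> D1 = (D1 - D2) \<bullet> D2" by metis
  then have "(D1 - D2) \<bullet> (D1 - D2) = 0" by (simp add: inner_diff_right)
  then show ?thesis by simp
qed

lemma wsum_bound:
  fixes w x :: "'i::finite \<Rightarrow> real"
  assumes "\<forall>i. w i \<ge> 0" "(\<Sum>i\<in>UNIV. w i) = 1" "\<forall>i. \<bar>x i\<bar> \<le> B"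
  shows "\<bar>\<Sum>i\<in>UNIV. w i * x i\<bar> \<le> B"
proof -
  have "\<bar>\<Sum>i\<in>UNIV. w i * x i\<bar> \<le> (\<Sum>i\<in>UNIV. \<bar>w i * x i\<bar>)" by (rule sum_abs)
  also have "\<dots> \<le> (\<Sum>i\<in>UNIV. w i * B)"
    using assms by (intro sum_mono) (simp add: abs_mult mult_left_mono)
  also have "\<dots> = B" using assms by (simp add: sum_distrib_right[symmetric])
  finally show ?thesis .
qed

lemma concentrated:
  fixes p :: "'i::finite \<Rightarrow> real"
  assumes "\<forall>i. p i \<ge> 0" "(\<Sum>i\<in>UNIV. p i) = 1" "p x0 = 1" "y \<noteq> x0"
  shows "p y = 0"
proof -
  have "(\<Sum>i\<in>UNIV. p i) = p x0 + (\<Sum>i\<in>UNIV - {x0}. p i)"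
    by (simp add: sum.remove)
  then have "(\<Sum>i\<in>UNIV - {x0}. p i) = 0" using assms by simp
  then have "\<forall>i\<in>UNIV - {x0}. p i = 0" using assms(1) by (simp add: sum_nonneg_eq_0_iff)
  then show ?thesis using assms(4) by simp
qed

lemma Q_bound:
  assumes P_nonneg: "\<forall>s a s'. P s a s' \<ge> 0" and P_sum: "\<forall>s a. (\<Sum>s'\<in>UNIV. P s a s') = 1"
    and pol_nonneg: "\<forall>s a. pol s a \<ge> 0" and pol_sum: "\<forall>s. (\<Sum>a\<in>UNIV. pol s a) = 1"
    and M: "\<forall>s a s'. \<bar>mean_reward R s a s'\<bar> \<le> M" and g: "0 \<le> \<gamma>" "\<gamma> \<le> 1"
  shows "\<bar>Q_steps P R pol \<gamma> k s a\<bar> \<le> k * M"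
proof (induction k arbitrary: s a)
  case 0 then show ?case by simp
next
  case (Suc k)
  have V: "\<bar>Vs P R pol \<gamma> k s'\<bar> \<le> k * M" for s'
    unfolding Vs_def using pol_nonneg pol_sum Suc by (intro wsum_bound) auto
  have "\<bar>mean_reward R s a s' + \<gamma> * Vs P R pol \<gamma> k s'\<bar> \<le> M + k * M" for s'
  proof -
    have "\<bar>\<gamma> * Vs P R pol \<gamma> k s'\<bar> \<le> 1 * (k * M)"
      unfolding abs_mult using g V by (intro mult_mono) auto
    then show ?thesis using M[rule_format, of s a s'] by linarith
  qed
  then have "\<bar>Q_steps P R pol \<gamma> (Suc k) s a\<bar> \<le> M + k * M"
    unfolding Q_Suc' using P_nonneg P_sum by (intro wsum_bound) auto
  then show ?case by (simp add: algebra_simps)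
qed

lemma Q_diff_bound:
  assumes P_nonneg: "\<forall>s a s'. P s a s' \<ge> 0" and P_sum: "\<forall>s a. (\<Sum>s'\<in>UNIV. P s a s') = 1"
    and pol_nonneg: "\<forall>s a. pol s a \<ge> 0" and pol_sum: "\<forall>s. (\<Sum>a\<in>UNIV. pol s a) = 1"
    and M: "\<forall>s a s'. \<bar>mean_reward R s a s'\<bar> \<le> M" and g: "0 \<le> \<gamma>" "\<gamma> \<le> 1"
  shows "\<bar>Q_steps P R pol \<gamma> k s a - Q_steps P R pol 1 k s a\<bar> \<le> (1 - \<gamma>) * k * k * M"
proof (induction k arbitrary: s a)
  case 0 then show ?case by simp
next
  case (Suc k)
  have M0: "M \<ge> 0" using M by (meson abs_ge_zero order.trans)
  have B1: "\<bar>Q_steps P R pol 1 k s a\<bar> \<le> k * M" for s a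
    using Q_bound[OF P_nonneg P_sum pol_nonneg pol_sum M] by simp
  have T: "\<bar>\<gamma> * Q_steps P R pol \<gamma> k s' a' - Q_steps P R pol 1 k s' a'\<bar> \<le> (1 - \<gamma>) * k * k * M + (1 - \<gamma>) * (k * M)" for s' a'
  proof -
    have e: "\<gamma> * Q_steps P R pol \<gamma> k s' a' - Q_steps P R pol 1 k s' a'
       = \<gamma> * (Q_steps P R pol \<gamma> k s' a' - Q_steps P R pol 1 k s' a') - (1 - \<gamma>) * Q_steps P R pol 1 k s' a'"
      by (simp add: algebra_simps)
    have "\<bar>\<gamma> * (Q_steps P R pol \<gamma> k s' a' - Q_steps P R pol 1 k s' a')\<bar> \<le> 1 * ((1 - \<gamma>) * k * k * M)"
      unfolding abs_mult using g Suc[of s' a'] by (intro mult_mono) auto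
    moreover have "\<bar>(1 - \<gamma>) * Q_steps P R pol 1 k s' a'\<bar> \<le> (1 - \<gamma>) * (k * M)"
      unfolding abs_mult using g B1[of s' a'] by (intro mult_mono) auto
    ultimately show ?thesis unfolding e by linarith
  qed
  have V: "\<bar>\<gamma> * Vs P R pol \<gamma> k s' - Vs P R pol 1 k s'\<bar> \<le> (1 - \<gamma>) * k * k * M + (1 - \<gamma>) * (k * M)" for s'
  proof -
    have "\<gamma> * Vs P R pol \<gamma> k s' - Vs P R pol 1 k s'
       = (\<Sum>a'\<in>UNIV. pol s' a' * (\<gamma> * Q_steps P R pol \<gamma> k s' a' - Q_steps P R pol 1 k s' a'))"
      unfolding Vs_def by (simp add: sum_distrib_left sum_subtractf algebra_simps)
    also have "\<bar>\<dots>\<bar> \<le> (1 - \<gamma>) * k * k * M + (1 - \<gamma>) * (k * M)"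
      using pol_nonneg pol_sum T by (intro wsum_bound) auto
    finally show ?thesis .
  qed
  have "Q_steps P R pol \<gamma> (Suc k) s a - Q_steps P R pol 1 (Suc k) s a
      = (\<Sum>s'\<in>UNIV. P s a s' * (\<gamma> * Vs P R pol \<gamma> k s' - Vs P R pol 1 k s'))"
    unfolding Q_Suc' sum_subtractf[symmetric] by (rule sum.cong) (simp_all add: algebra_simps)
  also have "\<bar>\<dots>\<bar> \<le> (1 - \<gamma>) * k * k * M + (1 - \<gamma>) * (k * M)"
    using P_nonneg P_sum V by (intro wsum_bound) auto
  also have "\<dots> \<le> (1 - \<gamma>) * Suc k * Suc k * M"
  proof -
    have "(1 - \<gamma>) * M \<ge> 0" using g M0 by simp
    then have "(1 - \<gamma>) * M * (k * k + k) \<le> (1 - \<gamma>) * M * (Suc k * Suc k)"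
      by (intro mult_left_mono) auto
    then show ?thesis by (simp add: algebra_simps)
  qed
  finally show ?case .
qed

lemma Q_term_zero:
  assumes P_nonneg: "\<forall>s a s'. P s a s' \<ge> 0" and P_sum: "\<forall>s a. (\<Sum>s'\<in>UNIV. P s a s') = 1"
    and abs: "\<forall>a. P st a st = 1" and rew: "\<forall>a. mean_reward R st a st = 0"
  shows "Q_steps P R pol \<gamma> k st a = 0"
proof (induction k arbitrary: a)
  case 0 then show ?case by simp
next
  case (Suc k)
  have h: "P st a s' * (mean_reward R st a s' + \<gamma> * (\<Sum>a'\<in>UNIV. pol s' a' * Q_steps P R pol \<gamma> k s' a')) = 0" for s'
  proof (cases "s' = st")
    case True then show ?thesis using Suc rew by simp
  next
    case False
    then have "P st a s' = 0" using concentrated[of "P st a" st s'] P_nonneg P_sum abs by auto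
    then show ?thesis by simp
  qed
  show ?case by (simp only: Q_steps.simps h sum.neutral_const)
qed

lemma sd_pos_step:
  assumes "\<forall>s. d s \<ge> 0" "\<forall>s a s'. P s a s' \<ge> 0" "\<forall>s a. pol s a > (0::real)"
    and "state_dist d P pol t s > 0" "P s a s' > 0"
  shows "state_dist d P pol (Suc t) s' > 0"
proof -
  have nn: "\<forall>s. state_dist d P pol t s \<ge> 0"
    using sd_nonneg[of d P pol] assms(1,2,3) by (simp add: less_imp_le)
  have "0 < state_dist d P pol t s * pol s a * P s a s'" using assms by simp
  also have "\<dots> \<le> (\<Sum>a\<in>UNIV. state_dist d P pol t s * pol s a * P s a s')"
    using nn assms(2,3) by (intro member_le_sum) (auto simp: less_imp_le)
  also have "\<dots> \<le> (\<Sum>s\<in>UNIV. \<Sum>a\<in>UNIV. state_dist d P pol t s * pol s a * P s a s')"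
    using nn assms(2,3) by (intro member_le_sum sum_nonneg) (auto simp: less_imp_le)
  finally show ?thesis by simp
qed

lemma Q_inv:
  assumes d_nonneg: "\<forall>s. d s \<ge> 0" and d_sum: "(\<Sum>s\<in>UNIV. d s) = 1"
    and P_nonneg: "\<forall>s a s'. P s a s' \<ge> 0" and P_sum: "\<forall>s a. (\<Sum>s'\<in>UNIV. P s a s') = 1"
    and pol_pos: "\<forall>s a. pol s a > 0" and pol_sum: "\<forall>s. (\<Sum>a\<in>UNIV. pol s a) = 1"
    and abs: "\<forall>a. P st a st = 1" and rew: "\<forall>a. mean_reward R st a st = 0"
    and termT: "state_dist d P pol T st = 1"
  shows "t + m = T \<Longrightarrow> state_dist d P pol t s > 0 \<Longrightarrow> m \<le> k \<Longrightarrow>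
     Q_steps P R pol \<gamma> k s a = Q_steps P R pol \<gamma> m s a"
proof (induction m arbitrary: t s k a)
  case 0
  have nn: "\<forall>s. state_dist d P pol T s \<ge> 0"
    using sd_nonneg[of d P pol] d_nonneg P_nonneg pol_pos by (simp add: less_imp_le)
  have sm: "(\<Sum>s\<in>UNIV. state_dist d P pol T s) = 1"
    using sd_sum[of d P pol] d_sum P_sum pol_sum by simp
  have "s = st"
  proof (rule ccontr)
    assume "s \<noteq> st"
    then have "state_dist d P pol T s = 0" using concentrated[OF nn sm termT] by simp
    then show False using 0 by simp
  qed
  then show ?case using Q_term_zero[OF P_nonneg P_sum abs rew] by simp
next
  case (Suc m)
  obtain k' where k': "k = Suc k'" "m \<le> k'" using Suc.prems(3) by (cases k) auto
  have h: "P s a s' * (mean_reward R s a s' + \<gamma> * Vs P R pol \<gamma> k' s')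
      = P s a s' * (mean_reward R s a s' + \<gamma> * Vs P R pol \<gamma> m s')" for s'
  proof (cases "P s a s' = 0")
    case False
    then have "P s a s' > 0" using P_nonneg by (simp add: less_le)
    then have "state_dist d P pol (Suc t) s' > 0"
      using sd_pos_step[OF d_nonneg P_nonneg pol_pos Suc.prems(2)] by simp
    then have "Q_steps P R pol \<gamma> k' s' a' = Q_steps P R pol \<gamma> m s' a'" for a'
      using Suc.IH[of "Suc t" s' k' a'] Suc.prems(1) k' by simp
    then show ?thesis unfolding Vs_def by simp
  qed simp
  show ?case unfolding k' Q_Suc' by (rule sum.cong[OF refl h])
qed

lemma norm_sum3:
  fixes f :: "nat \<Rightarrow> 's::finite \<Rightarrow> 'a::finite \<Rightarrow> 'v::real_normed_vector" and K :: real
  assumes "\<And>t s a. t \<in> A \<Longrightarrow> norm (f t s a) \<le> K" "finite A"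
  shows "norm (\<Sum>t\<in>A. \<Sum>s\<in>UNIV. \<Sum>a\<in>UNIV. f t s a) \<le> card A * CARD('s) * CARD('a) * K"
proof -
  have "norm (\<Sum>t\<in>A. \<Sum>s\<in>UNIV. \<Sum>a\<in>UNIV. f t s a) \<le> (\<Sum>t\<in>A. CARD('s) * (CARD('a) * K))"
  proof (rule sum_norm_le)
    fix t assume t: "t \<in> A"
    show "norm (\<Sum>s\<in>UNIV. \<Sum>a\<in>UNIV. f t s a) \<le> CARD('s) * (CARD('a) * K)"
    proof -
      have "norm (\<Sum>s\<in>UNIV. \<Sum>a\<in>UNIV. f t s a) \<le> (\<Sum>s\<in>(UNIV::'s set). CARD('a) * K)"
      proof (rule sum_norm_le)
        fix s :: 's
        have "norm (\<Sum>a\<in>UNIV. f t s a) \<le> (\<Sum>a\<in>(UNIV::'a set). K)"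
          using assms(1)[OF t] by (intro sum_norm_le) auto
        then show "norm (\<Sum>a\<in>UNIV. f t s a) \<le> CARD('a) * K" by simp
      qed
      then show ?thesis by simp
    qed
  qed
  then show ?thesis by (simp add: algebra_simps)
qed

lemma grad_bias:
  fixes gl :: "'s::finite \<Rightarrow> 'a::finite \<Rightarrow> 'v::real_normed_vector" and M Lp :: real
  assumes d_nonneg: "\<forall>s. d s \<ge> 0" and d_sum: "(\<Sum>s\<in>UNIV. d s) = 1"
    and P_nonneg: "\<forall>s a s'. P s a s' \<ge> 0" and P_sum: "\<forall>s a. (\<Sum>s'\<in>UNIV. P s a s') = 1"
    and pol_pos: "\<forall>s a. pol s a > 0" and pol_sum: "\<forall>s. (\<Sum>a\<in>UNIV. pol s a) = 1"
    and abs: "\<forall>a. P st a st = 1" and rew: "\<forall>a. mean_reward R st a st = 0"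
    and termT: "state_dist d P pol T st = 1"
    and M: "\<forall>s a s'. \<bar>mean_reward R s a s'\<bar> \<le> M" and g: "0 \<le> \<gamma>" "\<gamma> \<le> 1"
    and gl: "\<forall>s a. norm (gl s a) \<le> Lp"
  shows "norm ((\<Sum>s\<in>UNIV. d s *\<^sub>R GV P R pol gl T s) - disc_grad d P R pol gl T \<gamma>)
     \<le> T * CARD('s) * CARD('a) * ((1 - \<gamma>) * T * T * M * Lp)"
proof -
  have M0: "M \<ge> 0" using M by (meson abs_ge_zero order.trans)
  have Lp0: "Lp \<ge> 0" using gl by (meson norm_ge_zero order.trans)
  have pol_nonneg: "\<forall>s a. pol s a \<ge> 0" using pol_pos by (simp add: less_imp_le)
  have sd_nn: "state_dist d P pol t s \<ge> 0" for t s
    using sd_nonneg[of d P pol] d_nonneg P_nonneg pol_nonneg by simp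
  have sd_le1: "state_dist d P pol t s \<le> 1" for t s
  proof -
    have "state_dist d P pol t s \<le> (\<Sum>s\<in>UNIV. state_dist d P pol t s)"
      using sd_nn by (intro member_le_sum) auto
    then show ?thesis using sd_sum[of d P pol t] d_sum P_sum pol_sum by simp
  qed
  have pol_le1: "pol s a \<le> 1" for s a
  proof -
    have "pol s a \<le> (\<Sum>a\<in>UNIV. pol s a)"
      using pol_nonneg by (intro member_le_sum) auto
    then show ?thesis using pol_sum by simp
  qed
  have "(\<Sum>s\<in>UNIV. d s *\<^sub>R GV P R pol gl T s) - disc_grad d P R pol gl T \<gamma>
    = (\<Sum>t<T. \<Sum>s\<in>UNIV. \<Sum>a\<in>UNIV. (state_dist d P pol t s * pol s a *
         (Q_steps P R pol 1 (T - t) s a - Q_steps P R pol \<gamma> T s a)) *\<^sub>R gl s a)"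
    unfolding GV_unroll disc_grad_def Q_gamma_def sum_subtractf[symmetric]
    by (intro sum.cong refl) (simp add: algebra_simps)
  also have "norm \<dots> \<le> card {..<T} * CARD('s) * CARD('a) * ((1 - \<gamma>) * T * T * M * Lp)"
  proof (rule norm_sum3)
    fix t s a assume t: "t \<in> {..<T}"
    show "norm ((state_dist d P pol t s * pol s a *
         (Q_steps P R pol 1 (T - t) s a - Q_steps P R pol \<gamma> T s a)) *\<^sub>R gl s a)
         \<le> (1 - \<gamma>) * T * T * M * Lp"
    proof (cases "state_dist d P pol t s = 0")
      case True then show ?thesis using g M0 Lp0 by simp
    next
      case False
      then have pos: "state_dist d P pol t s > 0" using sd_nn[of t s] by simp
      have eq: "Q_steps P R pol \<gamma> T s a = Q_steps P R pol \<gamma> (T - t) s a"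
        using Q_inv[OF d_nonneg d_sum P_nonneg P_sum pol_pos pol_sum abs rew termT, of t "T - t" s T \<gamma> a] t pos
        by simp
      have "\<bar>Q_steps P R pol 1 (T - t) s a - Q_steps P R pol \<gamma> (T - t) s a\<bar> \<le> (1 - \<gamma>) * (T - t) * (T - t) * M"
        using Q_diff_bound[OF P_nonneg P_sum pol_nonneg pol_sum M g, of "T - t" s a] by (simp add: abs_minus_commute)
      also have "\<dots> \<le> (1 - \<gamma>) * T * T * M"
        using g M0 by (intro mult_right_mono mult_mono) auto
      finally have qd: "\<bar>Q_steps P R pol 1 (T - t) s a - Q_steps P R pol \<gamma> T s a\<bar> \<le> (1 - \<gamma>) * T * T * M"
        unfolding eq .
      have "norm ((state_dist d P pol t s * pol s a *
         (Q_steps P R pol 1 (T - t) s a - Q_steps P R pol \<gamma> T s a)) *\<^sub>R gl s a)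
        = state_dist d P pol t s * pol s a * \<bar>Q_steps P R pol 1 (T - t) s a - Q_steps P R pol \<gamma> T s a\<bar> * norm (gl s a)"
        using sd_nn[of t s] pol_nonneg by (simp add: abs_mult)
      also have "\<dots> \<le> 1 * 1 * ((1 - \<gamma>) * T * T * M) * Lp"
        using sd_nn[of t s] pol_nonneg sd_le1[of t s] pol_le1[of s a] qd gl
        by (intro mult_mono) auto
      finally show ?thesis by simp
    qed
  qed simp
  finally show ?thesis by simp
qed

lemma disc_grad_bound:
  fixes gl :: "'s::finite \<Rightarrow> 'a::finite \<Rightarrow> 'v::real_normed_vector" and M Lp :: real
  assumes d_nonneg: "\<forall>s. d s \<ge> 0" and d_sum: "(\<Sum>s\<in>UNIV. d s) = 1"
    and P_nonneg: "\<forall>s a s'. P s a s' \<ge> 0" and P_sum: "\<forall>s a. (\<Sum>s'\<in>UNIV. P s a s') = 1"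
    and pol_nonneg: "\<forall>s a. pol s a \<ge> 0" and pol_sum: "\<forall>s. (\<Sum>a\<in>UNIV. pol s a) = 1"
    and M: "\<forall>s a s'. \<bar>mean_reward R s a s'\<bar> \<le> M" and g: "0 \<le> \<gamma>" "\<gamma> \<le> 1"
    and gl: "\<forall>s a. norm (gl s a) \<le> Lp"
  shows "norm (disc_grad d P R pol gl T \<gamma>) \<le> T * CARD('s) * CARD('a) * (T * M * Lp)"
proof -
  have M0: "M \<ge> 0" using M by (meson abs_ge_zero order.trans)
  have Lp0: "Lp \<ge> 0" using gl by (meson norm_ge_zero order.trans)
  have sd_nn: "state_dist d P pol t s \<ge> 0" for t s
    using sd_nonneg[of d P pol] d_nonneg P_nonneg pol_nonneg by simp
  have sd_le1: "state_dist d P pol t s \<le> 1" for t s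
  proof -
    have "state_dist d P pol t s \<le> (\<Sum>s\<in>UNIV. state_dist d P pol t s)"
      using sd_nn by (intro member_le_sum) auto
    then show ?thesis using sd_sum[of d P pol t] d_sum P_sum pol_sum by simp
  qed
  have pol_le1: "pol s a \<le> 1" for s a
  proof -
    have "pol s a \<le> (\<Sum>a\<in>UNIV. pol s a)"
      using pol_nonneg by (intro member_le_sum) auto
    then show ?thesis using pol_sum by simp
  qed
  have "norm (disc_grad d P R pol gl T \<gamma>) \<le> card {..<T} * CARD('s) * CARD('a) * (T * M * Lp)"
    unfolding disc_grad_def
  proof (rule norm_sum3)
    fix t s a
    have "\<bar>Q_gamma P R pol T \<gamma> s a\<bar> \<le> T * M"
      unfolding Q_gamma_def using Q_bound[OF P_nonneg P_sum pol_nonneg pol_sum M g] by simp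
    then have "state_dist d P pol t s * pol s a * \<bar>Q_gamma P R pol T \<gamma> s a\<bar> * norm (gl s a) \<le> 1 * 1 * (T * M) * Lp"
      using sd_nn[of t s] pol_nonneg sd_le1[of t s] pol_le1[of s a] gl
      by (intro mult_mono) auto
    then show "norm ((state_dist d P pol t s * pol s a * Q_gamma P R pol T \<gamma> s a) *\<^sub>R gl s a) \<le> T * M * Lp"
      using sd_nn[of t s] pol_nonneg by (simp add: abs_mult)
  qed simp
  then show ?thesis by simp
qed

lemma descent:
  fixes f :: "'v::real_inner \<Rightarrow> real"
  assumes der: "\<forall>z. GDERIV f z :> g z" and lip: "L-lipschitz_on UNIV g"
  shows "f y \<ge> f x + g x \<bullet> (y - x) - L / 2 * (norm (y - x))\<^sup>2"
proof -
  define v where "v = y - x"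
  define \<phi> where "\<phi> t = f (x + t *\<^sub>R v) - t * (g x \<bullet> v) + L / 2 * t\<^sup>2 * (norm v)\<^sup>2" for t
  have L0: "L \<ge> 0" using lip by (simp add: lipschitz_on_def)
  have D: "DERIV \<phi> t :> (g (x + t *\<^sub>R v) \<bullet> v - g x \<bullet> v + L * t * (norm v)\<^sup>2)" for t
  proof -
    have l: "((\<lambda>t. x + t *\<^sub>R v) has_derivative (\<lambda>t. t *\<^sub>R v)) (at t)"
      by (auto intro!: derivative_eq_intros)
    have "((\<lambda>t. f (x + t *\<^sub>R v)) has_derivative (\<lambda>h. (h *\<^sub>R v) \<bullet> g (x + t *\<^sub>R v))) (at t)"
      using has_derivative_compose[OF l, of f] der unfolding gderiv_def by blast
    moreover have "(\<lambda>h. (h *\<^sub>R v) \<bullet> g (x + t *\<^sub>R v)) = (*) (g (x + t *\<^sub>R v) \<bullet> v)"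
      by (auto simp: inner_commute)
    ultimately have "DERIV (\<lambda>t. f (x + t *\<^sub>R v)) t :> g (x + t *\<^sub>R v) \<bullet> v"
      unfolding has_field_derivative_def by simp
    then show ?thesis unfolding \<phi>_def
      by (auto intro!: derivative_eq_intros)
  qed
  obtain z where z: "0 < z" "z < 1" "\<phi> 1 - \<phi> 0 = (1 - 0) * (g (x + z *\<^sub>R v) \<bullet> v - g x \<bullet> v + L * z * (norm v)\<^sup>2)"
    using MVT2[of 0 1 \<phi>, OF _ D] by auto
  have "\<bar>(g (x + z *\<^sub>R v) - g x) \<bullet> v\<bar> \<le> norm (g (x + z *\<^sub>R v) - g x) * norm v"
    by (rule Cauchy_Schwarz_ineq2)
  also have "norm (g (x + z *\<^sub>R v) - g x) \<le> L * (z * norm v)"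
    using lipschitz_onD[OF lip, of "x + z *\<^sub>R v" x] z by (simp add: dist_norm)
  then have "norm (g (x + z *\<^sub>R v) - g x) * norm v \<le> L * (z * norm v) * norm v"
    by (simp add: mult_right_mono)
  finally have "g (x + z *\<^sub>R v) \<bullet> v - g x \<bullet> v + L * z * (norm v)\<^sup>2 \<ge> 0"
    by (simp add: inner_diff_left power2_eq_square algebra_simps)
  then have "\<phi> 1 \<ge> \<phi> 0" using z by simp
  then show ?thesis unfolding \<phi>_def v_def by simp
qed

lemma seq_to_zero:
  fixes a h :: "nat \<Rightarrow> real"
  assumes apos: "\<forall>i. a i > 0" and ns: "\<not> summable a" and sm: "summable (\<lambda>i. a i * (h i)\<^sup>2)"
    and hnn: "\<forall>i. h i \<ge> 0" and inc: "\<forall>i. h (Suc i) - h i \<le> K * a i"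
    and a0: "a \<longlonglongrightarrow> 0" and K: "K > 0"
  shows "h \<longlonglongrightarrow> 0"
proof (rule LIMSEQ_I)
  fix \<epsilon> :: real assume ep: "\<epsilon> > 0"
  show "\<exists>no. \<forall>n\<ge>no. norm (h n - 0) < \<epsilon>"
  proof (rule ccontr)
    assume "\<not> ?thesis"
    then have freq: "\<forall>N. \<exists>k\<ge>N. h k \<ge> \<epsilon>" using hnn by (auto simp: not_less)
    define \<delta> where "\<delta> = \<epsilon> / 2"
    have d0: "\<delta> > 0" using ep by (simp add: \<delta>_def)
    define V where "V = \<delta> * \<delta> * (\<delta> / (2 * K))"
    have V0: "V > 0" using d0 K by (simp add: V_def)
    obtain N1 where N1: "\<forall>m\<ge>N1. \<forall>n. norm (sum (\<lambda>i. a i * (h i)\<^sup>2) {m..<n}) < V"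
      using sm V0 unfolding summable_Cauchy by blast
    obtain N2 where N2: "\<forall>n\<ge>N2. norm (a n - 0) < \<delta> / (2 * K)"
      using LIMSEQ_D[OF a0, of "\<delta> / (2 * K)"] d0 K by auto
    define N where "N = max N1 N2"
    obtain i where i: "i \<ge> N" "h i < \<delta>"
    proof (rule ccontr)
      assume "\<not> thesis"
      then have big: "\<forall>j\<ge>N. h j \<ge> \<delta>" using that by (meson not_less)
      have "summable (\<lambda>j. a j * (h j)\<^sup>2 / \<delta>\<^sup>2)" using sm by (rule summable_divide)
      moreover have "norm (a j) \<le> a j * (h j)\<^sup>2 / \<delta>\<^sup>2" if "j \<ge> N" for j
      proof -
        have "\<delta>\<^sup>2 \<le> (h j)\<^sup>2" using big that d0 by (intro power_mono) auto
        then have "a j * \<delta>\<^sup>2 \<le> a j * (h j)\<^sup>2" using apos by (intro mult_left_mono) (auto simp: less_imp_le)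
        then show ?thesis using apos[rule_format, of j] d0 by (simp add: field_simps abs_of_pos)
      qed
      ultimately have "summable a" by (rule summable_comparison_test')
      then show False using ns by simp
    qed
    obtain k where k: "k \<ge> i" "h k \<ge> \<epsilon>" using freq by blast
    have ik: "i < k" using k i ep by (cases "k = i") (auto simp: \<delta>_def)
    define S where "S = {j. i \<le> j \<and> j < k \<and> h j < \<delta>}"
    have finS: "finite S" unfolding S_def by (rule finite_subset[of _ "{..<k}"]) auto
    have iS: "i \<in> S" using ik i by (simp add: S_def)
    define p where "p = Max S"
    have pS: "p \<in> S" unfolding p_def using finS iS by (intro Max_in) auto
    then have p: "i \<le> p" "p < k" "h p < \<delta>" by (auto simp: S_def)
    have above: "h j \<ge> \<delta>" if "p < j" "j < k" for j
    proof (rule ccontr)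
      assume "\<not> h j \<ge> \<delta>"
      then have "j \<in> S" using that p by (auto simp: S_def)
      then have "j \<le> p" unfolding p_def using finS by (intro Max_ge)
      then show False using that by simp
    qed
    have "h k - h p = (\<Sum>j=p..<k. h (Suc j) - h j)" using p by (simp add: sum_Suc_diff')
    also have "\<dots> \<le> (\<Sum>j=p..<k. K * a j)" using inc by (intro sum_mono) auto
    also have "\<dots> = K * a p + K * (\<Sum>j=Suc p..<k. a j)"
      using p by (simp add: sum.atLeast_Suc_lessThan sum_distrib_left)
    finally have t1: "h k - h p \<le> K * a p + K * (\<Sum>j=Suc p..<k. a j)" .
    have "p \<ge> N2" using p i by (simp add: N_def)
    then have "a p < \<delta> / (2 * K)" using N2 apos by (simp add: less_imp_le)
    then have "K * a p < \<delta> / 2" using K by (simp add: field_simps)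
    moreover have "h k - h p > \<delta>" using k p by (simp add: \<delta>_def)
    ultimately have "K * (\<Sum>j=Suc p..<k. a j) > \<delta> / 2" using t1 by linarith
    then have A: "(\<Sum>j=Suc p..<k. a j) > \<delta> / (2 * K)" using K by (simp add: field_simps)
    have c1: "V < \<delta> * \<delta> * (\<Sum>j=Suc p..<k. a j)"
      unfolding V_def using A d0 by (intro mult_strict_left_mono) auto
    have c2: "\<delta> * \<delta> * (\<Sum>j=Suc p..<k. a j) = (\<Sum>j=Suc p..<k. a j * \<delta>\<^sup>2)" by (simp add: sum_distrib_left power2_eq_square algebra_simps)
    have c3: "(\<Sum>j=Suc p..<k. a j * \<delta>\<^sup>2) \<le> (\<Sum>j=Suc p..<k. a j * (h j)\<^sup>2)"
    proof (rule sum_mono)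
      fix j assume "j \<in> {Suc p..<k}"
      then have "\<delta>\<^sup>2 \<le> (h j)\<^sup>2" using above d0 by (intro power_mono) auto
      then show "a j * \<delta>\<^sup>2 \<le> a j * (h j)\<^sup>2" using apos by (intro mult_left_mono) (auto simp: less_imp_le)
    qed
    have c4: "(\<Sum>j=Suc p..<k. a j * (h j)\<^sup>2) \<le> norm (\<Sum>j=Suc p..<k. a j * (h j)\<^sup>2)" by simp
    have c5: "norm (\<Sum>j=Suc p..<k. a j * (h j)\<^sup>2) < V" using N1 p i by (simp add: N_def)
    show False using c1 c2 c3 c4 c5 by linarith
  qed
qed

theorem theorem2:
  fixes d0 :: "'s::finite \<Rightarrow> real"
    and P :: "'s \<Rightarrow> 'a::finite \<Rightarrow> 's \<Rightarrow> real"
    and R :: "'s \<Rightarrow> 'a \<Rightarrow> 's \<Rightarrow> real measure"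
    and Rmax :: real
    and s_term :: 's
    and T :: nat
    and \<pi> :: "real^'n \<Rightarrow> 's \<Rightarrow> 'a \<Rightarrow> real"
    and glog :: "real^'n \<Rightarrow> 's \<Rightarrow> 'a \<Rightarrow> real^'n"
    and L\<pi> :: real
    and gradJ :: "real^'n \<Rightarrow> real^'n"
    and \<theta> :: "nat \<Rightarrow> real^'n"
    and \<alpha> \<gamma> :: "nat \<Rightarrow> real"
    and c :: real
  assumes d0_nonneg: "\<forall>s. d0 s \<ge> 0" and d0_sum: "(\<Sum>s\<in>UNIV. d0 s) = 1"
    and P_nonneg: "\<forall>s a s'. P s a s' \<ge> 0"
    and P_sum: "\<forall>s a. (\<Sum>s'\<in>UNIV. P s a s') = 1"
    and R_prob: "\<forall>s a s'. prob_space (R s a s')"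
    and R_sets: "\<forall>s a s'. sets (R s a s') = sets borel"
    and R_bounded: "\<forall>s a s'. AE x in R s a s'. \<bar>x\<bar> \<le> Rmax"
    and term_absorbing: "\<forall>a. P s_term a s_term = 1"
    and term_reward: "\<forall>a. R s_term a s_term = return borel 0"
    and term_at_T: "\<forall>\<theta>'. state_dist d0 P (\<pi> \<theta>') T s_term = 1"
    and \<pi>_pos: "\<forall>\<theta>' s a. \<pi> \<theta>' s a > 0"
    and \<pi>_sum: "\<forall>\<theta>' s. (\<Sum>a\<in>UNIV. \<pi> \<theta>' s a) = 1"
    and \<pi>_diff: "\<forall>\<theta>' s a. GDERIV (\<lambda>x. ln (\<pi> x s a)) \<theta>' :> glog \<theta>' s a"
    and glog_bound: "\<forall>\<theta>' s a. norm (glog \<theta>' s a) \<le> L\<pi>"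
    and J_grad: "\<forall>\<theta>'. GDERIV (\<lambda>x. J_obj d0 P R (\<pi> x) T) \<theta>' :> gradJ \<theta>'"
    and gradJ_lipschitz: "\<exists>L. L-lipschitz_on UNIV gradJ"
    and update: "\<forall>i. \<theta> (Suc i) = \<theta> i + \<alpha> i *\<^sub>R
                   disc_grad d0 P R (\<pi> (\<theta> i)) (glog (\<theta> i)) T (\<gamma> i)"
    and \<alpha>_pos: "\<forall>i. \<alpha> i > 0"
    and \<gamma>_range: "\<forall>i. 0 \<le> \<gamma> i \<and> \<gamma> i \<le> 1"
    and \<alpha>_sum: "\<not> summable \<alpha>"
    and \<alpha>_sq_sum: "summable (\<lambda>i. (\<alpha> i)\<^sup>2)"
    and c_pos: "c > 0"
    and \<alpha>_ge: "\<forall>i. \<alpha> i \<ge> c * (1 - \<gamma> i)"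
  shows "convergent (\<lambda>i. J_obj d0 P R (\<pi> (\<theta> i)) T)
         \<and> (\<lambda>i. gradJ (\<theta> i)) \<longlonglongrightarrow> 0
         \<and> (\<forall>\<theta>' r. strict_mono r \<and> (\<theta> \<circ> r) \<longlonglongrightarrow> \<theta>' \<longrightarrow> gradJ \<theta>' = 0)"
proof -
  define M where "M = (\<Sum>s\<in>UNIV. \<Sum>a\<in>UNIV. \<Sum>s'\<in>UNIV. \<bar>mean_reward R s a s'\<bar>)"
  have Mb: "\<forall>s a s'. \<bar>mean_reward R s a s'\<bar> \<le> M"
  proof (intro allI)
    fix s a s'
    have "\<bar>mean_reward R s a s'\<bar> \<le> (\<Sum>s'\<in>UNIV. \<bar>mean_reward R s a s'\<bar>)"
      by (intro member_le_sum) auto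
    also have "\<dots> \<le> (\<Sum>a\<in>UNIV. \<Sum>s'\<in>UNIV. \<bar>mean_reward R s a s'\<bar>)"
      by (intro member_le_sum sum_nonneg) auto
    also have "\<dots> \<le> M" unfolding M_def
      by (intro member_le_sum sum_nonneg) auto
    finally show "\<bar>mean_reward R s a s'\<bar> \<le> M" .
  qed
  have M0: "M \<ge> 0" unfolding M_def by (intro sum_nonneg) auto
  have rew: "\<forall>a. mean_reward R s_term a s_term = 0"
    using term_reward by (simp add: mean_reward_def integral_return)
  have Lp0: "L\<pi> \<ge> 0" using glog_bound by (meson norm_ge_zero order.trans)
  have pol_nonneg: "\<forall>s a. \<pi> x s a \<ge> 0" for x using \<pi>_pos by (simp add: less_imp_le)
  have gradJ_eq: "gradJ x = (\<Sum>s\<in>UNIV. d0 s *\<^sub>R GV P R (\<pi> x) (glog x) T s)" for x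
  proof -
    have pd: "\<forall>s a. GDERIV (\<lambda>y. \<pi> y s a) x :> \<pi> x s a *\<^sub>R glog x s a"
      using \<pi>_pos \<pi>_diff by (auto intro!: pi_deriv)
    have "GDERIV (\<lambda>y. \<Sum>s\<in>UNIV. d0 s * Vs P R (\<pi> y) 1 T s) x :> (\<Sum>s\<in>UNIV. d0 s *\<^sub>R GV P R (\<pi> x) (glog x) T s)"
      by (intro GDERIV_sum GDERIV_cmult GV_deriv pd) auto
    moreover have "(\<lambda>y. J_obj d0 P R (\<pi> y) T) = (\<lambda>y. \<Sum>s\<in>UNIV. d0 s * Vs P R (\<pi> y) 1 T s)"
      by (simp add: J_Vs)
    ultimately show ?thesis using J_grad GDERIV_unique by metis
  qed
  define Bc where "Bc = real T * CARD('s) * CARD('a) * (T * T * M * L\<pi>)"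
  define D where "D = real T * CARD('s) * CARD('a) * (T * M * L\<pi>)"
  have Bc0: "Bc \<ge> 0" unfolding Bc_def using M0 Lp0 by simp
  have D0: "D \<ge> 0" unfolding D_def using M0 Lp0 by simp
  have bias: "norm (gradJ x - disc_grad d0 P R (\<pi> x) (glog x) T g) \<le> Bc * (1 - g)"
    if "0 \<le> g" "g \<le> 1" for x g
  proof -
    have "norm (gradJ x - disc_grad d0 P R (\<pi> x) (glog x) T g) \<le> T * CARD('s) * CARD('a) * ((1 - g) * T * T * M * L\<pi>)"
      unfolding gradJ_eq
      using grad_bias[OF d0_nonneg d0_sum P_nonneg P_sum, of "\<pi> x" s_term R T M g "glog x" L\<pi>]
        \<pi>_pos \<pi>_sum term_absorbing rew term_at_T Mb that glog_bound by auto
    then show ?thesis unfolding Bc_def by (simp add: algebra_simps)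
  qed
  have dgb: "norm (disc_grad d0 P R (\<pi> x) (glog x) T g) \<le> D"
    if "0 \<le> g" "g \<le> 1" for x g
    unfolding D_def
    using disc_grad_bound[OF d0_nonneg d0_sum P_nonneg P_sum pol_nonneg, of x R M g "glog x" L\<pi> T]
      \<pi>_sum Mb that glog_bound by auto
  have Jb: "\<bar>J_obj d0 P R (\<pi> x) T\<bar> \<le> T * M" for x
  proof -
    have "\<bar>Vs P R (\<pi> x) 1 T s\<bar> \<le> T * M" for s
      unfolding Vs_def using Q_bound[OF P_nonneg P_sum pol_nonneg, of x R M 1 T s] \<pi>_sum Mb
      by (intro wsum_bound) (auto simp: pol_nonneg)
    then show ?thesis unfolding J_Vs using d0_nonneg d0_sum by (intro wsum_bound) auto
  qed
  obtain L where lip: "L-lipschitz_on UNIV gradJ" using gradJ_lipschitz by blast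
  have L0: "L \<ge> 0" using lip by (simp add: lipschitz_on_def)
  have der: "\<forall>z. GDERIV (\<lambda>x. J_obj d0 P R (\<pi> x) T) z :> gradJ z" using J_grad by blast
  define f where "f i = J_obj d0 P R (\<pi> (\<theta> i)) T" for i
  define g where "g i = gradJ (\<theta> i)" for i
  define dd where "dd i = disc_grad d0 P R (\<pi> (\<theta> i)) (glog (\<theta> i)) T (\<gamma> i)" for i
  define G where "G = D + Bc"
  define C where "C = G * Bc / c + L / 2 * D\<^sup>2"
  have G0: "G \<ge> 0" unfolding G_def using D0 Bc0 by simp
  have C0: "C \<ge> 0" unfolding C_def G_def using Bc0 D0 L0 c_pos by simp
  have dd_b: "norm (dd i) \<le> D" for i unfolding dd_def using dgb \<gamma>_range by auto
  have e_b: "norm (g i - dd i) \<le> Bc / c * \<alpha> i" for i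
  proof -
    have "norm (g i - dd i) \<le> Bc * (1 - \<gamma> i)" unfolding g_def dd_def using bias \<gamma>_range by auto
    also have "\<dots> \<le> Bc * (\<alpha> i / c)"
      using \<alpha>_ge c_pos Bc0 by (intro mult_left_mono) (auto simp: field_simps mult.commute)
    finally show ?thesis by simp
  qed
  have g_b: "norm (g i) \<le> G" for i
  proof -
    have "norm (g i - dd i) \<le> Bc * (1 - \<gamma> i)" unfolding g_def dd_def using bias \<gamma>_range by auto
    also have "\<dots> \<le> Bc" using Bc0 \<gamma>_range by (simp add: mult_left_le)
    finally have "norm (g i - dd i) \<le> Bc" .
    then show ?thesis using dd_b[of i] norm_triangle_ineq[of "g i - dd i" "dd i"] unfolding G_def by simp
  qed
  have step: "\<theta> (Suc i) - \<theta> i = \<alpha> i *\<^sub>R dd i" for i using update by (simp add: dd_def)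
  have KI: "f (Suc i) - f i \<ge> \<alpha> i * (norm (g i))\<^sup>2 - C * (\<alpha> i)\<^sup>2" for i
  proof -
    have ds: "f (Suc i) \<ge> f i + g i \<bullet> (\<theta> (Suc i) - \<theta> i) - L / 2 * (norm (\<theta> (Suc i) - \<theta> i))\<^sup>2"
      unfolding f_def g_def by (rule descent[OF der lip])
    have a0: "\<alpha> i \<ge> 0" using \<alpha>_pos by (simp add: less_imp_le)
    have "g i \<bullet> dd i = (norm (g i))\<^sup>2 - g i \<bullet> (g i - dd i)"
      by (simp add: inner_diff_right power2_norm_eq_inner)
    moreover have "g i \<bullet> (g i - dd i) \<le> G * (Bc / c * \<alpha> i)"
    proof -
      have "g i \<bullet> (g i - dd i) \<le> norm (g i) * norm (g i - dd i)"
        using Cauchy_Schwarz_ineq2[of "g i" "g i - dd i"] by linarith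
      also have "\<dots> \<le> G * (Bc / c * \<alpha> i)"
        using g_b[of i] e_b[of i] G0 by (intro mult_mono) auto
      finally show ?thesis .
    qed
    ultimately have "g i \<bullet> dd i \<ge> (norm (g i))\<^sup>2 - G * Bc / c * \<alpha> i" by simp
    then have "\<alpha> i * (g i \<bullet> dd i) \<ge> \<alpha> i * ((norm (g i))\<^sup>2 - G * Bc / c * \<alpha> i)"
      using a0 by (rule mult_left_mono)
    then have i1: "g i \<bullet> (\<theta> (Suc i) - \<theta> i) \<ge> \<alpha> i * (norm (g i))\<^sup>2 - G * Bc / c * (\<alpha> i)\<^sup>2"
      unfolding step by (simp add: power2_eq_square right_diff_distrib mult.commute mult.left_commute)
    have "(norm (\<theta> (Suc i) - \<theta> i))\<^sup>2 = (\<alpha> i)\<^sup>2 * (norm (dd i))\<^sup>2"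
      unfolding step using a0 by (simp add: power_mult_distrib)
    also have "\<dots> \<le> (\<alpha> i)\<^sup>2 * D\<^sup>2"
      using dd_b[of i] by (intro mult_left_mono power_mono) auto
    finally have "L / 2 * (norm (\<theta> (Suc i) - \<theta> i))\<^sup>2 \<le> L / 2 * ((\<alpha> i)\<^sup>2 * D\<^sup>2)"
      using L0 by (intro mult_left_mono) auto
    then show ?thesis using ds i1 unfolding C_def by (simp add: algebra_simps)
  qed
  define ps where "ps n = (\<Sum>j<n. (\<alpha> j)\<^sup>2)" for n
  define u where "u n = f n + C * ps n" for n
  have ag: "\<alpha> i * (norm (g i))\<^sup>2 \<ge> 0" for i using \<alpha>_pos by (simp add: less_imp_le)
  have "incseq u"
  proof (rule incseq_SucI)
    fix i
    have e: "u (Suc i) - u i = f (Suc i) - f i + C * (\<alpha> i)\<^sup>2" unfolding u_def ps_def by (simp add: algebra_simps)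
    have k: "\<alpha> i * (norm (g i))\<^sup>2 - C * (\<alpha> i)\<^sup>2 \<le> f (Suc i) - f i" by (rule KI)
    have "u (Suc i) - u i \<ge> 0" unfolding e using k ag[of i] by linarith
    then show "u i \<le> u (Suc i)" by simp
  qed
  moreover have "\<forall>i. u i \<le> T * M + C * suminf (\<lambda>j. (\<alpha> j)\<^sup>2)"
  proof
    fix i
    have "ps i \<le> suminf (\<lambda>j. (\<alpha> j)\<^sup>2)" unfolding ps_def using \<alpha>_sq_sum
      by (intro sum_le_suminf) auto
    then have "C * ps i \<le> C * suminf (\<lambda>j. (\<alpha> j)\<^sup>2)" using C0 by (rule mult_left_mono)
    then show "u i \<le> T * M + C * suminf (\<lambda>j. (\<alpha> j)\<^sup>2)" unfolding u_def f_def using Jb[of "\<theta> i"] by linarith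
  qed
  ultimately obtain Lu where Lu: "u \<longlonglongrightarrow> Lu" by (rule incseq_convergent)
  have ps: "ps \<longlonglongrightarrow> suminf (\<lambda>j. (\<alpha> j)\<^sup>2)" unfolding ps_def using \<alpha>_sq_sum by (rule summable_LIMSEQ)
  have "(\<lambda>n. u n - C * ps n) \<longlonglongrightarrow> Lu - C * suminf (\<lambda>j. (\<alpha> j)\<^sup>2)"
    by (intro tendsto_intros Lu ps)
  then have flim: "f \<longlonglongrightarrow> Lu - C * suminf (\<lambda>j. (\<alpha> j)\<^sup>2)" unfolding u_def by simp
  then have conv: "convergent f" by (auto simp: convergent_def)
  have sm: "summable (\<lambda>i. \<alpha> i * (norm (g i))\<^sup>2)"
  proof (rule summable_comparison_test')
    show "summable (\<lambda>i. (f (Suc i) - f i) + C * (\<alpha> i)\<^sup>2)"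
      by (intro summable_add summable_mult telescope_summable[OF flim] \<alpha>_sq_sum)
    fix i :: nat
    show "norm (\<alpha> i * (norm (g i))\<^sup>2) \<le> (f (Suc i) - f i) + C * (\<alpha> i)\<^sup>2"
      using KI[of i] ag[of i] by simp
  qed
  have a0: "\<alpha> \<longlonglongrightarrow> 0"
  proof -
    have "(\<lambda>i. (\<alpha> i)\<^sup>2) \<longlonglongrightarrow> 0" using \<alpha>_sq_sum by (rule summable_LIMSEQ_zero)
    then have "(\<lambda>i. sqrt ((\<alpha> i)\<^sup>2)) \<longlonglongrightarrow> sqrt 0" by (rule tendsto_real_sqrt)
    moreover have "sqrt ((\<alpha> i)\<^sup>2) = \<alpha> i" for i using \<alpha>_pos by (simp add: less_imp_le)
    ultimately show ?thesis by simp
  qed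
  have inc: "\<forall>i. norm (g (Suc i)) - norm (g i) \<le> (L * D + 1) * \<alpha> i"
  proof
    fix i
    have "norm (g (Suc i)) - norm (g i) \<le> norm (g (Suc i) - g i)" by (rule norm_triangle_ineq2)
    also have "\<dots> \<le> L * norm (\<theta> (Suc i) - \<theta> i)"
      using lipschitz_onD[OF lip, of "\<theta> (Suc i)" "\<theta> i"] unfolding g_def by (simp add: dist_norm)
    also have "\<dots> = L * (\<alpha> i * norm (dd i))" unfolding step using \<alpha>_pos by (simp add: less_imp_le)
    also have "\<dots> \<le> L * (\<alpha> i * D)" using L0 \<alpha>_pos dd_b[of i]
      by (intro mult_left_mono) (auto simp: less_imp_le)
    also have "\<dots> \<le> (L * D + 1) * \<alpha> i" using \<alpha>_pos by (simp add: algebra_simps less_imp_le)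
    finally show "norm (g (Suc i)) - norm (g i) \<le> (L * D + 1) * \<alpha> i" .
  qed
  have LD: "L * D + 1 > 0" using mult_nonneg_nonneg[OF L0 D0] by linarith
  have "(\<lambda>i. norm (g i)) \<longlonglongrightarrow> 0"
    by (rule seq_to_zero[OF \<alpha>_pos \<alpha>_sum sm _ inc a0]) (use LD in simp_all)
  then have glim: "g \<longlonglongrightarrow> 0" by (simp add: tendsto_norm_zero_iff)
  have lp: "gradJ \<theta>' = 0" if "strict_mono r" "(\<theta> \<circ> r) \<longlonglongrightarrow> \<theta>'" for \<theta>' r
  proof -
    have cont: "continuous_on UNIV gradJ" by (rule lipschitz_on_continuous_on[OF lip])
    have "(\<lambda>n. gradJ ((\<theta> \<circ> r) n)) \<longlonglongrightarrow> gradJ \<theta>'"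
      by (rule continuous_on_tendsto_compose[OF cont that(2)]) auto
    moreover have "(g \<circ> r) \<longlonglongrightarrow> 0" by (rule LIMSEQ_subseq_LIMSEQ[OF glim that(1)])
    ultimately show ?thesis unfolding g_def comp_def using LIMSEQ_unique by blast
  qed
  show ?thesis using conv glim lp unfolding f_def g_def by blast
qed

end
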